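(* For a positive integer $d$, the number of primitive $(d,d)$-necklaces is odd if and only if $d$ is squarefree.
   Context: A $(d,d)$-necklace is a circular arrangement of $d$ white and $d$ black beads modulo cyclic rotation; it is primitive if its orbit under rotation has exactly $2d$ elements. *)

theory Defs
  imports Main "HOL-Computational_Algebra.Squarefree"
begin

text \<open>Binary words of length 2d with exactly d white beads (True = white, False = black).\<close>
definition balanced_words :: "nat \<Rightarrow> bool list set" where
  "balanced_words d = {w. length w = 2 * d \<and> length (filter id w) = d}"

definition rot_orbit :: "bool list \<Rightarrow> bool list set" where
  "rot_orbit w = {rotate k w | k. k < length w}"

definition necklaces :: "nat \<Rightarrow> bool list set set" where
  "necklaces d = rot_orbit ` balanced_words d"

definition primitive_necklaces :: "nat \<Rightarrow> bool list set set" where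
  "primitive_necklaces d = {N \<in> necklaces d. card N = 2 * d}"

end

theory Submission
  imports Defs
begin

definition per :: "bool list \<Rightarrow> nat" where
  "per w = (LEAST p. 0 < p \<and> rotate p w = w)"

lemma per_props:
  assumes "w \<noteq> []"
  shows "0 < per w" "rotate (per w) w = w" "per w \<le> length w"
    "\<And>q. 0 < q \<Longrightarrow> q < per w \<Longrightarrow> rotate q w \<noteq> w"
proof -
  have ex: "0 < length w \<and> rotate (length w) w = w" using assms by simp
  show "0 < per w" "rotate (per w) w = w"
    unfolding per_def using LeastI[of "\<lambda>p. 0 < p \<and> rotate p w = w", OF ex] by auto
  show "per w \<le> length w" unfolding per_def by (rule Least_le) (use ex in auto)
  fix q assume "0 < q" "q < per w"
  then show "rotate q w \<noteq> w" unfolding per_def using not_less_Least by blast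
qed

lemma rot_mult: "rotate p w = w \<Longrightarrow> rotate (t * p) w = w"
proof (induction t)
  case (Suc t)
  have "rotate (Suc t * p) w = rotate p (rotate (t*p) w)"
    by (simp add: rotate_rotate add.commute)
  also have "\<dots> = w" using Suc by simp
  finally show ?case .
qed simp

lemma rot_mod: "rotate p w = w \<Longrightarrow> rotate k w = rotate (k mod p) w"
proof -
  assume h: "rotate p w = w"
  have "rotate k w = rotate (k mod p) (rotate ((k div p) * p) w)"
    by (simp add: rotate_rotate)
  then show ?thesis using rot_mult[OF h] by simp
qed

lemma rot_iff:
  assumes "w \<noteq> []"
  shows "rotate k w = w \<longleftrightarrow> per w dvd k"
proof
  assume h: "rotate k w = w"
  have "rotate (k mod per w) w = w" using rot_mod[OF per_props(2)[OF assms], of k] h by simp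
  moreover have "k mod per w < per w" using per_props(1)[OF assms] by simp
  ultimately have "k mod per w = 0" using per_props(4)[OF assms] by blast
  then show "per w dvd k" by auto
next
  assume "per w dvd k"
  then obtain t where "k = t * per w" by (metis dvdE mult.commute)
  then show "rotate k w = w" using rot_mult[OF per_props(2)[OF assms]] by simp
qed

lemma per_dvd: "w \<noteq> [] \<Longrightarrow> per w dvd length w"
  using rot_iff[of w "length w"] by simp

lemma rot_orbit_range: "w \<noteq> [] \<Longrightarrow> rot_orbit w = range (\<lambda>k. rotate k w)"
proof -
  assume "w \<noteq> []"
  have "rotate k w \<in> rot_orbit w" for k
    unfolding rot_orbit_def using \<open>w \<noteq> []\<close>
    by (intro CollectI exI[of _ "k mod length w"]) (auto simp: rotate_conv_mod[of k w])
  then show ?thesis unfolding rot_orbit_def by auto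
qed

lemma rot_orbit_per: "w \<noteq> [] \<Longrightarrow> rot_orbit w = (\<lambda>k. rotate k w) ` {..<per w}"
proof -
  assume ne: "w \<noteq> []"
  have "rotate k w \<in> (\<lambda>k. rotate k w) ` {..<per w}" for k
    using rot_mod[OF per_props(2)[OF ne], of k] per_props(1)[OF ne] by auto
  then show ?thesis using rot_orbit_range[OF ne] by auto
qed

lemma rot_add_mult: "rotate (x + length w * c) w = rotate x w"
  by (subst (1 2) rotate_conv_mod) simp

lemma rotate_inj_aux:
  assumes "w \<noteq> []" "i < j" "rotate i w = rotate j w"
  shows "rotate (j - i) w = w"
proof -
  let ?n = "length w"
  have le: "i \<le> ?n * (i+1)" using assms(1) by (cases ?n) auto
  have "rotate (?n * (i+1) - i) (rotate i w) = rotate (?n * (i+1) - i + i) w"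
    by (simp only: rotate_rotate)
  also have "?n * (i+1) - i + i = ?n * (i+1)" using le by simp
  also have "rotate (?n * (i+1)) w = w" by simp
  finally have 1: "rotate (?n * (i+1) - i) (rotate i w) = w" .
  have "rotate (?n * (i+1) - i) (rotate j w) = rotate (?n * (i+1) - i + j) w"
    by (simp add: rotate_rotate)
  also have "?n * (i+1) - i + j = (j - i) + ?n * (i+1)"
  proof -
    have "i \<le> ?n * (i+1)" using assms(1) by (cases ?n) auto
    then show ?thesis using assms(2) by simp
  qed
  also have "rotate \<dots> w = rotate (j - i) w"
    by (rule rot_add_mult)
  finally have "rotate (?n * (i+1) - i) (rotate j w) = rotate (j - i) w" .
  then show ?thesis using 1 assms(3) by metis
qed

lemma card_rot_orbit: "w \<noteq> [] \<Longrightarrow> card (rot_orbit w) = per w"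
proof -
  assume ne: "w \<noteq> []"
  have "inj_on (\<lambda>k. rotate k w) {..<per w}"
  proof (rule inj_onI, rule ccontr)
    fix i j assume ij: "i \<in> {..<per w}" "j \<in> {..<per w}" "rotate i w = rotate j w" "i \<noteq> j"
    show False
    proof (cases "i < j")
      case True
      then show False using rotate_inj_aux[OF ne True ij(3)] per_props(4)[OF ne, of "j-i"] ij
        by (simp add: less_imp_diff_less)
    next
      case False
      then have "j < i" using ij by auto
      then show False using rotate_inj_aux[OF ne \<open>j < i\<close> ij(3)[symmetric]] per_props(4)[OF ne, of "i-j"] ij
        by (simp add: less_imp_diff_less)
    qed
  qed
  then show ?thesis using rot_orbit_per[OF ne] card_image by fastforce
qed

lemma rot_orbit_same:
  assumes "w \<noteq> []" "v \<in> rot_orbit w" shows "rot_orbit v = rot_orbit w"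
proof -
  obtain k where v: "v = rotate k w" using assms(2) unfolding rot_orbit_def by auto
  have vne: "v \<noteq> []" using assms v by simp
  have "rotate i v \<in> range (\<lambda>k. rotate k w)" for i using v by (simp add: rotate_rotate)
  moreover have "rotate i w \<in> range (\<lambda>k. rotate k v)" for i
  proof -
    let ?n = "length w"
    have "k \<le> ?n * k" using assms(1) by (cases ?n) auto
    then have kk: "i + ?n * k = (i + ?n * k - k) + k" by arith
    have "rotate i w = rotate (i + ?n * k) w"
      by (rule rot_add_mult[symmetric])
    also have "\<dots> = rotate ((i + ?n * k - k) + k) w" using kk by simp
    also have "\<dots> = rotate (i + ?n * k - k) v" using v by (simp add: rotate_rotate)
    finally show ?thesis by blast
  qed
  ultimately show ?thesis using rot_orbit_range[OF vne] rot_orbit_range[OF assms(1)] by auto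
qed

lemma self_in_orbit: "w \<noteq> [] \<Longrightarrow> w \<in> rot_orbit w"
  unfolding rot_orbit_def by (auto intro!: exI[of _ 0])


definition ext :: "nat \<Rightarrow> bool list \<Rightarrow> bool list" where
  "ext n r = map (\<lambda>i. r ! (i mod length r)) [0..<n]"

lemma length_ext[simp]: "length (ext n r) = n" by (simp add: ext_def)
lemma nth_ext[simp]: "i < n \<Longrightarrow> ext n r ! i = r ! (i mod length r)" by (simp add: ext_def)

lemma periodic_nth:
  assumes "rotate p w = w" "p dvd length w" "i < length w"
  shows "w ! i = w ! (i mod p)"
proof -
  have p0: "p > 0" using assms by (cases p) auto
  have ple: "p \<le> length w" using assms(2,3) by (intro dvd_imp_le) auto
  have lt: "i mod p < length w" using p0 ple by (meson mod_less_divisor order_less_le_trans)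
  have "w ! (i mod p) = rotate ((i div p) * p) w ! (i mod p)" using rot_mult[OF assms(1)] by simp
  also have "\<dots> = w ! (((i div p) * p + i mod p) mod length w)" using lt by (simp add: nth_rotate)
  also have "\<dots> = w ! i" using assms(3) by simp
  finally show ?thesis by (rule sym)
qed

lemma ext_take:
  assumes "rotate p w = w" "p dvd length w"
  shows "ext (length w) (take p w) = w"
proof -
  show ?thesis
  proof (rule nth_equalityI)
    fix i assume "i < length (ext (length w) (take p w))"
    then have i: "i < length w" by simp
    have ple: "p \<le> length w" using assms(2) i by (intro dvd_imp_le) auto
    have p0: "p > 0" using assms(2) i by (cases p) auto
    have lt: "i mod p < p" using p0 by simp
    have lt2: "length (take p w) = p" using ple by simp
    have "ext (length w) (take p w) ! i = take p w ! (i mod p)" using i lt2 by (simp only: nth_ext)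
    also have "\<dots> = w ! (i mod p)" using lt by simp
    also have "\<dots> = w ! i" using periodic_nth[OF assms i] by (rule sym)
    finally show "ext (length w) (take p w) ! i = w ! i" .
  qed simp
qed

lemma take_ext:
  assumes "length r = p" "p \<le> n"
  shows "take p (ext n r) = r"
proof (rule nth_equalityI)
  show "length (take p (ext n r)) = length r" using assms by simp
  fix i assume "i < length (take p (ext n r))"
  then have "i < p" "i < n" using assms by auto
  then show "take p (ext n r) ! i = r ! i" using assms by simp
qed

lemma rotate_ext_nth:
  assumes "r \<noteq> []" "length r dvd n" "i < n"
  shows "rotate k (ext n r) ! i = r ! ((k + i) mod length r)"
proof -
  have n0: "n > 0" using assms(3) by simp
  have "rotate k (ext n r) ! i = ext n r ! ((k + i) mod n)" using assms by (simp add: nth_rotate)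
  also have "\<dots> = r ! ((k + i) mod n mod length r)" using n0 by simp
  also have "(k + i) mod n mod length r = (k + i) mod length r" using assms(2) by (simp add: mod_mod_cancel)
  finally show ?thesis .
qed

lemma rotate_ext_iff:
  assumes "r \<noteq> []" "length r dvd n" "n > 0"
  shows "rotate k (ext n r) = ext n r \<longleftrightarrow> rotate k r = r"
proof
  have ple: "length r \<le> n" using assms by (auto simp: dvd_imp_le)
  assume h: "rotate k (ext n r) = ext n r"
  show "rotate k r = r"
  proof (rule nth_equalityI)
    fix i assume "i < length (rotate k r)"
    then have i: "i < length r" by simp
    then have i': "i < n" using ple by simp
    have "rotate k r ! i = r ! ((k + i) mod length r)" using i by (simp add: nth_rotate)
    also have "\<dots> = rotate k (ext n r) ! i" using rotate_ext_nth[OF assms(1,2) i'] by simp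
    also have "\<dots> = r ! i" using h i i' by simp
    finally show "rotate k r ! i = r ! i" .
  qed simp
next
  assume h: "rotate k r = r"
  show "rotate k (ext n r) = ext n r"
  proof (rule nth_equalityI)
    fix i assume "i < length (rotate k (ext n r))"
    then have i: "i < n" by simp
    have lt: "i mod length r < length r" using assms by simp
    have "rotate k (ext n r) ! i = r ! ((k + i) mod length r)" by (rule rotate_ext_nth[OF assms(1,2) i])
    also have "\<dots> = rotate k r ! (i mod length r)" using lt by (simp add: nth_rotate mod_add_right_eq)
    also have "\<dots> = ext n r ! i" using h i by simp
    finally show "rotate k (ext n r) ! i = ext n r ! i" .
  qed simp
qed

lemma per_eqI:
  assumes "x \<noteq> []" "y \<noteq> []" "\<And>k. rotate k x = x \<longleftrightarrow> rotate k y = y"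
  shows "per x = per y"
  using assms rot_iff[OF assms(1)] rot_iff[OF assms(2)]
  by (meson dvd_antisym dvd_refl)

lemma per_ext:
  assumes "r \<noteq> []" "length r dvd n" "n > 0"
  shows "per (ext n r) = per r"
proof -
  have "ext n r \<noteq> []" using assms by (metis length_0_conv length_ext not_less0)
  then show ?thesis using per_eqI[OF _ assms(1)] rotate_ext_iff[OF assms(1,2,3)] by blast
qed

lemma odd_mod_shift:
  fixes e j i :: nat
  assumes "odd j" shows "(e * j + i) mod (2 * e) = (e + i) mod (2 * e)"
proof -
  obtain t where "j = 2 * t + 1" using assms oddE by blast
  then have "e * j + i = (e + i) + t * (2 * e)" by (simp add: algebra_simps)
  then have "(e * j + i) mod (2 * e) = ((e + i) + t * (2 * e)) mod (2 * e)" by (simp only:)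
  then show ?thesis by (simp only: mod_mult_self1)
qed


definition SC :: "nat \<Rightarrow> bool list set" where
  "SC n = {w. length w = 2 * n \<and> rotate n w = map Not w}"

definition PSC :: "nat \<Rightarrow> bool list set" where
  "PSC n = {w \<in> SC n. per w = 2 * n}"

definition Ce :: "nat \<Rightarrow> nat \<Rightarrow> bool list set" where
  "Ce d e = {w \<in> SC d. per w = 2 * e}"

lemma map_Not_neq: "w \<noteq> [] \<Longrightarrow> map Not w \<noteq> w"
  by (cases w) auto

lemma SC_per:
  assumes "d > 0" "w \<in> SC d"
  obtains e where "per w = 2 * e" "e dvd d" "odd (d div e)"
proof -
  have len: "length w = 2 * d" and rot: "rotate d w = map Not w" using assms by (auto simp: SC_def)
  have ne: "w \<noteq> []" using len assms by auto
  have pd: "per w dvd 2 * d" using per_dvd[OF ne] len by simp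
  have npd: "\<not> per w dvd d"
  proof
    assume "per w dvd d"
    then have "rotate d w = w" using rot_iff[OF ne] by blast
    then show False using rot map_Not_neq[OF ne] by simp
  qed
  obtain j where j: "2 * d = per w * j" using pd by (auto elim: dvdE)
  have oj: "odd j"
  proof
    assume "even j"
    then obtain j' where "j = 2 * j'" by auto
    then have "d = per w * j'" using j by simp
    then show False using npd by simp
  qed
  have "even (per w * j)" using j by (metis dvd_triv_left)
  then have "even (per w)" using oj by simp
  then obtain e where e: "per w = 2 * e" by auto
  have dj: "d = e * j" using j e by simp
  have e0: "e > 0" using assms dj by (cases e) auto
  show ?thesis
  proof (rule that[OF e])
    show "e dvd d" using dj by simp
    show "odd (d div e)" using dj e0 oj by simp
  qed
qed

lemma take_PSC:
  assumes "d > 0" "w \<in> Ce d e" "e dvd d" "odd (d div e)"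
  shows "take (2 * e) w \<in> PSC e" "ext (2 * d) (take (2 * e) w) = w"
proof -
  have len: "length w = 2 * d" and rot: "rotate d w = map Not w" and pw: "per w = 2 * e"
    using assms by (auto simp: SC_def Ce_def)
  have ne: "w \<noteq> []" using len assms by auto
  have e0: "e > 0" using assms by (cases e) auto
  have pdv: "2 * e dvd length w" using assms(3) len by simp
  have rp: "rotate (2 * e) w = w" using per_props(2)[OF ne] pw by simp
  have ple: "2 * e \<le> 2 * d" using assms dvd_imp_le by auto
  let ?r = "take (2 * e) w"
  have lr: "length ?r = 2 * e" using ple len by simp
  have rne: "?r \<noteq> []" using lr e0 by auto
  show ex: "ext (2 * d) ?r = w" using ext_take[OF rp pdv] len by simp
  have "per w = per ?r" using per_ext[OF rne, of "2 * d"] lr assms ex by simp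
  then have pr: "per ?r = 2 * e" using pw by simp
  obtain j where dj: "d = e * j" using assms(3) by (auto elim: dvdE)
  have oj: "odd j" using dj e0 assms(4) by simp
  have "rotate e ?r = map Not ?r"
  proof (rule nth_equalityI)
    fix i assume "i < length (rotate e ?r)"
    then have i: "i < 2 * e" using lr by simp
    then have i2: "i < 2 * d" using ple by simp
    have m: "(e + i) mod (2 * e) < 2 * e" using e0 by simp
    have "rotate e ?r ! i = ?r ! ((e + i) mod (2 * e))" using i lr by (simp add: nth_rotate)
    also have "\<dots> = w ! ((e + i) mod (2 * e))" using m by simp
    also have "(e + i) mod (2 * e) = (d + i) mod (2 * d) mod (2 * e)"
      using dj oj assms(3) by (simp add: mod_mod_cancel odd_mod_shift)
    also have "w ! \<dots> = w ! ((d + i) mod (2 * d))"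
      using periodic_nth[OF rp pdv, of "(d + i) mod (2 * d)"] len assms(1) by simp
    also have "\<dots> = rotate d w ! i" using i2 len by (simp add: nth_rotate)
    also have "\<dots> = map Not ?r ! i" using rot i i2 len lr by simp
    finally show "rotate e ?r ! i = map Not ?r ! i" .
  qed simp
  then show "?r \<in> PSC e" using pr lr by (simp add: PSC_def SC_def)
qed

lemma ext_Ce:
  assumes "d > 0" "r \<in> PSC e" "e dvd d" "odd (d div e)"
  shows "ext (2 * d) r \<in> Ce d e" "take (2 * e) (ext (2 * d) r) = r"
proof -
  have lr: "length r = 2 * e" and rot: "rotate e r = map Not r" and pr: "per r = 2 * e"
    using assms by (auto simp: SC_def PSC_def)
  have e0: "e > 0" using assms by (cases e) auto
  have rne: "r \<noteq> []" using lr e0 by auto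
  have ple: "2 * e \<le> 2 * d" using assms dvd_imp_le by auto
  show "take (2 * e) (ext (2 * d) r) = r" using take_ext[OF lr] ple by simp
  have dv: "length r dvd 2 * d" using lr assms(3) by simp
  obtain j where dj: "d = e * j" using assms(3) by (auto elim: dvdE)
  have oj: "odd j" using dj e0 assms(4) by simp
  have pe: "per (ext (2 * d) r) = 2 * e" using per_ext[OF rne dv] assms(1) pr by simp
  have "rotate d (ext (2 * d) r) = map Not (ext (2 * d) r)"
  proof (rule nth_equalityI)
    fix i assume "i < length (rotate d (ext (2 * d) r))"
    then have i: "i < 2 * d" by simp
    have m: "i mod (2 * e) < 2 * e" using e0 by simp
    have "rotate d (ext (2 * d) r) ! i = r ! ((d + i) mod (2 * e))"
      using rotate_ext_nth[OF rne dv i] lr by simp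
    also have "(d + i) mod (2 * e) = (e + i mod (2 * e)) mod (2 * e)"
      using dj oj by (simp add: odd_mod_shift mod_add_right_eq)
    also have "r ! \<dots> = rotate e r ! (i mod (2 * e))" using m lr by (simp add: nth_rotate)
    also have "\<dots> = map Not (ext (2 * d) r) ! i" using rot m lr i by simp
    finally show "rotate d (ext (2 * d) r) ! i = map Not (ext (2 * d) r) ! i" .
  qed simp
  then show "ext (2 * d) r \<in> Ce d e" using pe by (simp add: Ce_def SC_def)
qed

lemma card_Ce:
  assumes "d > 0" "e dvd d" "odd (d div e)"
  shows "card (Ce d e) = card (PSC e)"
proof -
  have "bij_betw (take (2 * e)) (Ce d e) (PSC e)"
    by (rule bij_betw_byWitness[where f' = "ext (2 * d)"])
       (use take_PSC[OF assms(1) _ assms(2,3)] ext_Ce[OF assms(1) _ assms(2,3)] in auto)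
  then show ?thesis by (rule bij_betw_same_card)
qed


lemma finite_len: "finite {w :: bool list. length w = n}"
  using finite_lists_length_eq[of "UNIV :: bool set" n] by simp

lemma finite_SC: "finite (SC d)"
  by (rule finite_subset[OF _ finite_len[of "2 * d"]]) (auto simp: SC_def)

lemma card_SC: "card (SC d) = 2 ^ d"
proof -
  have "SC d = (\<lambda>u. u @ map Not u) ` {u. length u = d}"
  proof (intro set_eqI iffI)
    fix w assume "w \<in> SC d"
    then have len: "length w = 2 * d" and rot: "rotate d w = map Not w" by (auto simp: SC_def)
    define u where "u = take d w"
    define v where "v = drop d w"
    have w: "w = u @ v" unfolding u_def v_def by simp
    have lu: "length u = d" unfolding u_def using len by simp
    have lv: "length v = d" using w lu len by simp
    have h: "v @ u = map Not u @ map Not v" using rot w lu rotate_append[of u v] by simp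
    have L: "length v = length (map Not u)" using lv lu by simp
    from append_eq_append_conv[OF disjI1[OF L]] h have "v = map Not u" by blast
    then have "w = u @ map Not u" using w by simp
    then show "w \<in> (\<lambda>u. u @ map Not u) ` {u. length u = d}" using lu by (intro image_eqI[of _ _ u]) auto
  next
    fix w assume "w \<in> (\<lambda>u. u @ map Not u) ` {u. length u = d}"
    then obtain u where u: "length u = d" "w = u @ map Not u" by auto
    have "rotate d w = map Not u @ u" using rotate_append[of u "map Not u"] u by simp
    also have "\<dots> = map Not w" using u by (simp add: comp_def)
    finally show "w \<in> SC d" using u by (simp add: SC_def)
  qed
  moreover have "inj_on (\<lambda>u. u @ map Not u) {u. length u = d}"
  proof (rule inj_onI)
    fix x y assume "x \<in> {u :: bool list. length u = d}" "y \<in> {u :: bool list. length u = d}"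
      "x @ map Not x = y @ map Not y"
    then show "x = y" using append_eq_append_conv[of x y "map Not x" "map Not y"] by auto
  qed
  ultimately have "card (SC d) = card {u :: bool list. length u = d}" by (simp add: card_image)
  also have "\<dots> = 2 ^ d" using card_lists_length_eq[of "UNIV :: bool set" d] by simp
  finally show ?thesis .
qed

definition S :: "nat \<Rightarrow> nat" where "S e = card (rot_orbit ` PSC e)"

lemma PSC_closed:
  assumes "w \<in> PSC e" "v \<in> rot_orbit w" "e > 0"
  shows "v \<in> PSC e"
proof -
  have len: "length w = 2 * e" and rot: "rotate e w = map Not w" and pw: "per w = 2 * e"
    using assms by (auto simp: SC_def PSC_def)
  have ne: "w \<noteq> []" using len assms by auto
  obtain k where v: "v = rotate k w" using assms(2) unfolding rot_orbit_def by auto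
  have vne: "v \<noteq> []" using ne v by simp
  have "rotate e v = rotate k (rotate e w)" using v by (simp add: rotate_rotate add.commute)
  also have "\<dots> = map Not v" using rot v by (simp add: rotate_map)
  finally have r: "rotate e v = map Not v" .
  have "per v = per w" using card_rot_orbit[OF ne] card_rot_orbit[OF vne] rot_orbit_same[OF ne assms(2)] by simp
  then show ?thesis using r len v pw by (simp add: PSC_def SC_def)
qed

lemma card_PSC:
  assumes "e > 0" shows "card (PSC e) = 2 * e * S e"
proof -
  have fin: "finite (PSC e)" using finite_subset[OF _ finite_SC[of e]] by (auto simp: PSC_def)
  have ne: "w \<in> PSC e \<Longrightarrow> w \<noteq> []" for w using assms by (auto simp: PSC_def SC_def)
  have U: "\<Union>(rot_orbit ` PSC e) = PSC e"
    using PSC_closed[OF _ _ assms] self_in_orbit ne by blast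
  have "2 * e * card (rot_orbit ` PSC e) = card (\<Union>(rot_orbit ` PSC e))"
  proof (rule card_partition)
    show "finite (rot_orbit ` PSC e)" using fin by simp
    show "finite (\<Union>(rot_orbit ` PSC e))" using U fin by simp
    show "\<And>c. c \<in> rot_orbit ` PSC e \<Longrightarrow> card c = 2 * e"
      using card_rot_orbit ne by (auto simp: PSC_def)
    show "\<And>c1 c2. c1\<in>rot_orbit ` PSC e \<Longrightarrow> c2\<in>rot_orbit ` PSC e \<Longrightarrow> c1 \<noteq> c2 \<Longrightarrow> c1 \<inter> c2 = {}"
    proof -
      fix c1 c2 assume c: "c1 \<in> rot_orbit ` PSC e" "c2 \<in> rot_orbit ` PSC e" "c1 \<noteq> c2"
      then obtain w1 w2 where w: "w1 \<in> PSC e" "w2 \<in> PSC e" "c1 = rot_orbit w1" "c2 = rot_orbit w2" by auto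
      show "c1 \<inter> c2 = {}"
      proof (rule ccontr)
        assume "c1 \<inter> c2 \<noteq> {}"
        then obtain x where "x \<in> rot_orbit w1" "x \<in> rot_orbit w2" using w by auto
        then have "rot_orbit w1 = rot_orbit w2" using rot_orbit_same ne w by metis
        then show False using c w by simp
      qed
    qed
  qed
  then show ?thesis using U by (simp add: S_def)
qed

definition E :: "nat \<Rightarrow> nat set" where "E d = {e. e dvd d \<and> odd (d div e)}"

lemma main_identity:
  assumes "d > 0"
  shows "(\<Sum>e\<in>E d. 2 * e * S e) = 2 ^ d"
proof -
  have finE: "finite (E d)" using assms by (auto simp: E_def)
  have E0: "e \<in> E d \<Longrightarrow> e > 0" for e using assms by (auto simp: E_def intro: Nat.gr0I)
  have SCU: "SC d = (\<Union>e\<in>E d. Ce d e)"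
  proof (intro set_eqI iffI)
    fix w assume w: "w \<in> SC d"
    obtain e where "per w = 2 * e" "e dvd d" "odd (d div e)" using SC_per[OF assms w] by blast
    then show "w \<in> (\<Union>e\<in>E d. Ce d e)" using w by (auto simp: E_def Ce_def)
  qed (auto simp: Ce_def)
  have "card (SC d) = (\<Sum>e\<in>E d. card (Ce d e))"
    unfolding SCU
  proof (rule card_UN_disjoint[OF finE])
    show "\<forall>i\<in>E d. finite (Ce d i)" using finite_SC by (auto simp: Ce_def)
    show "\<forall>i\<in>E d. \<forall>j\<in>E d. i \<noteq> j \<longrightarrow> Ce d i \<inter> Ce d j = {}" by (auto simp: Ce_def)
  qed
  also have "\<dots> = (\<Sum>e\<in>E d. 2 * e * S e)"
    by (rule sum.cong) (auto simp: card_Ce[OF assms] card_PSC E0 E_def)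
  finally show ?thesis using card_SC by simp
qed


lemma invol_parity:
  assumes "finite A" "\<And>x. x \<in> A \<Longrightarrow> f x \<in> A" "\<And>x. x \<in> A \<Longrightarrow> f (f x) = x"
  shows "even (card A) \<longleftrightarrow> even (card {x\<in>A. f x = x})"
  using assms
proof (induction "card A" arbitrary: A rule: less_induct)
  case less
  show ?case
  proof (cases "\<exists>x\<in>A. f x \<noteq> x")
    case False
    then have "{x\<in>A. f x = x} = A" by auto
    then show ?thesis by simp
  next
    case True
    then obtain x where x: "x \<in> A" "f x \<noteq> x" by blast
    let ?A = "A - {x, f x}"
    have fx: "f x \<in> A" using less x by auto
    have cA: "card A = card ?A + 2"
    proof -
      have "card ?A = card A - card {x, f x}" using less(2) x fx by (subst card_Diff_subset) auto
      moreover have "card {x, f x} = 2" using x by simp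
      moreover have "card A \<ge> 2" using x fx less(2)
        by (metis \<open>card {x, f x} = 2\<close> card_mono empty_subsetI insert_subset)
      ultimately show ?thesis by simp
    qed
    have IH: "even (card ?A) \<longleftrightarrow> even (card {y\<in>?A. f y = y})"
    proof (rule less(1))
      show "card ?A < card A" using cA by simp
      show "finite ?A" using less by simp
      fix y assume y: "y \<in> ?A"
      then show "f (f y) = y" using less by auto
      show "f y \<in> ?A"
      proof -
        have "f y \<in> A" using less y by auto
        moreover have "f y \<noteq> x" using y less x by (metis DiffE insertCI)
        moreover have "f y \<noteq> f x" using y less x by (metis DiffE insertCI)
        ultimately show ?thesis by simp
      qed
    qed
    have "{y\<in>?A. f y = y} = {y\<in>A. f y = y}" using x less by auto
    then show ?thesis using IH cA by simp
  qed
qed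

lemma sqf_divisors_even:
  fixes m :: nat
  assumes "m > 1"
  shows "even (card {g. g dvd m \<and> squarefree g})"
proof -
  obtain q where q: "prime q" "q dvd m" using prime_factor_nat[of m] assms by auto
  have q1: "q > 1" using q prime_gt_1_nat by blast
  define f where "f g = (if q dvd g then g div q else g * q)" for g :: nat
  let ?A = "{g. g dvd m \<and> squarefree g}"
  have fin: "finite ?A" using assms by simp
  have A1: "f g \<in> ?A \<and> f (f g) = g \<and> f g \<noteq> g" if g: "g \<in> ?A" for g
  proof -
    have g0: "g > 0" using g assms by (auto intro: Nat.gr0I)
    show ?thesis
    proof (cases "q dvd g")
      case True
      then obtain h where h: "g = q * h" by (rule dvdE)
      have nq: "\<not> q dvd h"
      proof
        assume "q dvd h"
        then have q2: "q^2 dvd g" unfolding h power2_eq_square by (rule mult_dvd_mono[OF dvd_refl])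
        have sq: "squarefree g" using g by simp
        have "q dvd 1" by (rule squarefreeD[OF sq q2])
        then show False using q by simp
      qed
      have fg: "f g = h" using True h q1 by (simp add: f_def)
      have "h dvd m" using g h by (metis dvd_mult_right mem_Collect_eq dvd_trans)
      moreover have "squarefree h" using g h squarefree_mono[of h g] by simp
      moreover have "f h = g" using nq h by (simp add: f_def)
      moreover have "h \<noteq> g" using h g0 q1 by auto
      ultimately show ?thesis using fg by simp
    next
      case False
      have fg: "f g = g * q" using False by (simp add: f_def)
      have cop: "coprime g q" using prime_imp_coprime[OF q(1) False] by (simp add: coprime_commute)
      have "g * q dvd m" using g q cop by (simp add: divides_mult)
      moreover have "squarefree (g * q)"
        using cop g squarefree_prime[OF q(1)] by (intro squarefree_mult_coprime) auto
      moreover have "f (g * q) = g" using q1 by (simp add: f_def)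
      moreover have "g * q \<noteq> g" using g0 q1 by simp
      ultimately show ?thesis using fg by simp
    qed
  qed
  have inv: "even (card ?A) \<longleftrightarrow> even (card {x\<in>?A. f x = x})"
    by (rule invol_parity[OF fin]) (use A1 in blast)+
  have e: "{x\<in>?A. f x = x} = {}" using A1 by blast
  show ?thesis using inv unfolding e by simp
qed

lemma NT:
  fixes T :: "nat \<Rightarrow> nat" and c :: nat
  assumes c: "c \<le> 1"
    and H: "\<And>m. m > 0 \<Longrightarrow> odd m \<Longrightarrow> (\<Sum>g\<in>{g. g dvd m}. T g) mod 2 = (if m = 1 then c else 0)"
  shows "m > 0 \<Longrightarrow> odd m \<Longrightarrow> T m mod 2 = (if squarefree m then c else 0)"
proof (induction m rule: less_induct)
  case (less m)
  show ?case
  proof (cases "m = 1")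
    case True
    then show ?thesis using H[of 1] by simp
  next
    case False
    let ?P = "{g. g dvd m \<and> g \<noteq> m}"
    have finP: "finite ?P" using less by simp
    have split: "{g. g dvd m} = insert m ?P" by auto
    have "(\<Sum>g\<in>{g. g dvd m}. T g) = T m + (\<Sum>g\<in>?P. T g)"
      unfolding split using finP by (subst sum.insert) auto
    then have h1: "(T m + (\<Sum>g\<in>?P. T g)) mod 2 = 0" using H[OF less(2,3)] False by simp
    have "(\<Sum>g\<in>?P. T g) mod 2 = (\<Sum>g\<in>?P. T g mod 2) mod 2" by (rule mod_sum_eq[symmetric])
    also have "(\<Sum>g\<in>?P. T g mod 2) = (\<Sum>g\<in>?P. if squarefree g then c else 0)"
    proof (rule sum.cong)
      fix g assume g: "g \<in> ?P"
      then have gm: "g dvd m" "g \<noteq> m" by auto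
      have "g \<le> m" using gm(1) less(2) by (rule dvd_imp_le)
      then have "g < m" using gm(2) by simp
      moreover have "g > 0" using gm(1) less(2) by (cases g) auto
      moreover have "odd g"
      proof
        assume "even g"
        then have "2 dvd m" using gm(1) by (rule dvd_trans)
        then show False using less(3) by simp
      qed
      ultimately show "T g mod 2 = (if squarefree g then c else 0)" using less(1) by blast
    qed simp
    also have "\<dots> = c * card {g\<in>?P. squarefree g}"
    proof -
      have "?P \<inter> Collect squarefree = {g\<in>?P. squarefree g}" by auto
      then show ?thesis using finP by (simp add: sum.If_cases)
    qed
    finally have h2: "(\<Sum>g\<in>?P. T g) mod 2 = (c * card {g\<in>?P. squarefree g}) mod 2" .
    have m1: "m > 1" using less(2) False by simp
    have ev: "even (card {g. g dvd m \<and> squarefree g})" by (rule sqf_divisors_even[OF m1])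
    have "{g. g dvd m \<and> squarefree g} = (if squarefree m then insert m {g\<in>?P. squarefree g} else {g\<in>?P. squarefree g})"
      by auto
    then have ev2: "even (card {g\<in>?P. squarefree g} + (if squarefree m then 1 else 0))"
    proof -
      have f2: "finite {g\<in>?P. squarefree g}" using finP by (rule finite_subset[rotated]) auto
      have nm: "m \<notin> {g\<in>?P. squarefree g}" by simp
      show ?thesis using ev card_insert_disjoint[OF f2 nm] \<open>{g. g dvd m \<and> squarefree g} = _\<close>
        by (cases "squarefree m") simp_all
    qed
    have "(T m + c * card {g\<in>?P. squarefree g}) mod 2 = 0"
      using h1 h2 by (metis mod_add_right_eq)
    then have ev3: "even (T m + c * card {g\<in>?P. squarefree g})" by (simp only: even_iff_mod_2_eq_zero)
    have "c = 0 \<or> c = 1" using c by auto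
    then show ?thesis
    proof
      assume "c = 0"
      then show ?thesis using ev3 by (simp add: even_iff_mod_2_eq_zero)
    next
      assume c1: "c = 1"
      then have ev4: "even (T m) \<longleftrightarrow> even (card {g\<in>?P. squarefree g})" using ev3 by simp
      show ?thesis
      proof (cases "squarefree m")
        case True
        then have "odd (T m)" using ev2 ev4 by simp
        then show ?thesis using True c1 by (simp add: odd_iff_mod_2_eq_one)
      next
        case False
        then have "even (T m)" using ev2 ev4 by simp
        then show ?thesis using False by (simp add: even_iff_mod_2_eq_zero)
      qed
    qed
  qed
qed


lemma two_adic: "(d::nat) > 0 \<Longrightarrow> \<exists>a m. d = 2 ^ a * m \<and> odd m"
proof (induction d rule: less_induct)
  case (less d)
  show ?case
  proof (cases "odd d")
    case True then show ?thesis by (intro exI[of _ 0] exI[of _ d]) simp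
  next
    case False
    then obtain d' where d': "d = 2 * d'" by (auto elim: evenE)
    then have "d' < d" "d' > 0" using less by auto
    then obtain a m where "d' = 2 ^ a * m" "odd m" using less by blast
    then show ?thesis using d' by (intro exI[of _ "Suc a"] exI[of _ m]) auto
  qed
qed

lemma E_char:
  assumes "odd m" "m > 0"
  shows "E (2 ^ a * m) = (\<lambda>g. 2 ^ a * g) ` {g. g dvd m}"
proof (intro set_eqI iffI)
  fix e assume "e \<in> E (2 ^ a * m)"
  then have ed: "e dvd 2 ^ a * m" and ok: "odd (2 ^ a * m div e)" by (auto simp: E_def)
  obtain k where k: "2 ^ a * m = e * k" using ed by (rule dvdE)
  have e0: "e > 0" using k assms by (cases e) auto
  have kk: "2 ^ a * m div e = k" using k e0 by simp
  have "coprime (2 ^ a) k" using ok kk by simp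
  moreover have "2 ^ a dvd e * k" using k by (metis dvd_triv_left)
  ultimately have "2 ^ a dvd e" by (simp add: coprime_dvd_mult_left_iff)
  then obtain g where g: "e = 2 ^ a * g" by (rule dvdE)
  then have "m = g * k" using k by simp
  then have "g dvd m" by simp
  then show "e \<in> (\<lambda>g. 2 ^ a * g) ` {g. g dvd m}" using g by blast
next
  fix e assume "e \<in> (\<lambda>g. 2 ^ a * g) ` {g. g dvd m}"
  then obtain g where g: "e = 2 ^ a * g" "g dvd m" by blast
  obtain k where k: "m = g * k" using g(2) by (rule dvdE)
  have g0: "g > 0" using k assms by (cases g) auto
  have "2 ^ a * m div e = k" using g k g0 by simp
  moreover have "odd k" using k assms by simp
  ultimately show "e \<in> E (2 ^ a * m)" using g k by (auto simp: E_def)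
qed

lemma pow_ge: "a \<ge> 2 \<Longrightarrow> (2::nat) ^ a \<ge> a + 2"
proof (induction a rule: dec_induct)
  case (step n) then show ?case by simp
qed simp

lemma T_identity:
  assumes "odd m" "m > 0"
  shows "(\<Sum>g\<in>{g. g dvd m}. S (2 ^ a * g)) mod 2 = (if m = 1 then (if a \<le> 1 then 1 else 0) else 0)"
proof -
  let ?d = "2 ^ a * m"
  have d0: "?d > 0" using assms by simp
  have inj: "inj_on (\<lambda>g. 2 ^ a * g) {g. g dvd m}" by (rule inj_onI) simp
  have "(\<Sum>e\<in>E ?d. 2 * e * S e) = 2 ^ ?d" by (rule main_identity[OF d0])
  then have "(\<Sum>g\<in>{g. g dvd m}. 2 * (2 ^ a * g) * S (2 ^ a * g)) = 2 ^ ?d"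
    unfolding E_char[OF assms] by (simp add: sum.reindex[OF inj])
  then have "2 * 2 ^ a * (\<Sum>g\<in>{g. g dvd m}. g * S (2 ^ a * g)) = 2 ^ ?d"
    by (simp add: sum_distrib_left mult.assoc)
  also have "(2::nat) ^ ?d = 2 * 2 ^ a * 2 ^ (?d - a - 1)"
  proof -
    have "?d \<ge> 2 ^ a" using assms by simp
    moreover have "2 ^ a \<ge> a + 1" by (induction a) auto
    ultimately have "?d = (?d - a - 1) + a + 1" by linarith
    then have "(2::nat) ^ ?d = 2 ^ ((?d - a - 1) + a + 1)" by (rule arg_cong)
    then show ?thesis by (simp add: power_add)
  qed
  finally have sumid: "(\<Sum>g\<in>{g. g dvd m}. g * S (2 ^ a * g)) = 2 ^ (?d - a - 1)" by simp
  have "(\<Sum>g\<in>{g. g dvd m}. S (2 ^ a * g)) mod 2 = (\<Sum>g\<in>{g. g dvd m}. S (2 ^ a * g) mod 2) mod 2"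
    by (rule mod_sum_eq[symmetric])
  also have "(\<Sum>g\<in>{g. g dvd m}. S (2 ^ a * g) mod 2) = (\<Sum>g\<in>{g. g dvd m}. g * S (2 ^ a * g) mod 2)"
  proof (rule sum.cong)
    fix g assume "g \<in> {g. g dvd m}"
    then have "odd g" using assms by (auto dest: dvd_trans[of 2 g m])
    then have "g mod 2 = 1" by (simp add: odd_iff_mod_2_eq_one)
    then show "S (2 ^ a * g) mod 2 = g * S (2 ^ a * g) mod 2" by (simp add: mod_mult_left_eq[symmetric])
  qed simp
  also have "(\<dots>) mod 2 = (2::nat) ^ (?d - a - 1) mod 2" by (simp only: mod_sum_eq sumid)
  also have "\<dots> = (if m = 1 then (if a \<le> 1 then 1 else 0) else 0)"
  proof -
    have "?d - a - 1 = 0 \<longleftrightarrow> m = 1 \<and> a \<le> 1"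
    proof
      assume h: "?d - a - 1 = 0"
      show "m = 1 \<and> a \<le> 1"
      proof (rule ccontr)
        assume "\<not> (m = 1 \<and> a \<le> 1)"
        then consider "m \<noteq> 1" | "a \<ge> 2" by linarith
        then show False
        proof cases
          case 1
          then have "m \<ge> 2" using assms by simp
          then have "?d \<ge> 2 ^ a * 2" by simp
          moreover have "2 ^ a \<ge> a + 1" by (induction a) auto
          ultimately show False using h by linarith
        next
          case 2
          have "?d \<ge> 2 ^ a" using assms by simp
          then show False using pow_ge[OF 2] h by linarith
        qed
      qed
    next
      assume "m = 1 \<and> a \<le> 1"
      then show "?d - a - 1 = 0" by (cases a) auto
    qed
    moreover have "?d - a - 1 \<noteq> 0 \<Longrightarrow> (2::nat) ^ (?d - a - 1) mod 2 = 0" by (cases "?d - a - 1") auto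
    ultimately show ?thesis by auto
  qed
  finally show ?thesis .
qed

lemma sqf_2a:
  assumes "odd m"
  shows "squarefree ((2::nat) ^ a * m) \<longleftrightarrow> a \<le> 1 \<and> squarefree m"
proof
  assume h: "squarefree ((2::nat) ^ a * m)"
  have "squarefree m" using squarefree_multD(2)[OF h] .
  moreover have "a \<le> 1"
  proof (rule ccontr)
    assume "\<not> a \<le> 1"
    then have "(2::nat) ^ 2 dvd 2 ^ a" by (intro le_imp_power_dvd) auto
    then have "(2::nat) ^ 2 dvd 2 ^ a * m" by (rule dvd_mult2)
    from not_squarefreeI[OF this] h show False by simp
  qed
  ultimately show "a \<le> 1 \<and> squarefree m" by simp
next
  assume h: "a \<le> 1 \<and> squarefree m"
  then consider "a = 0" | "a = 1" by linarith
  then show "squarefree ((2::nat) ^ a * m)"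
  proof cases
    case 1 then show ?thesis using h by simp
  next
    case 2
    have "coprime (2::nat) m" using assms by simp
    from squarefree_mult_coprime[OF this squarefree_prime[OF two_is_prime_nat]] h 2 show ?thesis by simp
  qed
qed

theorem S_odd_iff:
  assumes "d > 0" shows "odd (S d) \<longleftrightarrow> squarefree d"
proof -
  obtain a m where d: "d = 2 ^ a * m" "odd m" using two_adic[OF assms] by blast
  have m0: "m > 0" using d by (cases m) auto
  let ?c = "if a \<le> 1 then 1 else 0 :: nat"
  have H: "\<And>m'. m' > 0 \<Longrightarrow> odd m' \<Longrightarrow> (\<Sum>g\<in>{g. g dvd m'}. S (2 ^ a * g)) mod 2 = (if m' = 1 then ?c else 0)"
    using T_identity by blast
  have c: "?c \<le> 1" by simp
  have r: "S (2 ^ a * m) mod 2 = (if squarefree m then ?c else 0)"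
    by (rule NT[where T="\<lambda>g. S (2 ^ a * g)" and c="?c", OF c H m0 d(2)])
  have sq: "squarefree d \<longleftrightarrow> a \<le> 1 \<and> squarefree m" using sqf_2a[OF d(2), of a] d(1) by simp
  show ?thesis
  proof (cases "a \<le> 1 \<and> squarefree m")
    case True
    then have "S d mod 2 = 1" using r d(1) by simp
    then show ?thesis using sq True by (simp add: odd_iff_mod_2_eq_one)
  next
    case False
    then have "S d mod 2 = 0" using r d(1) by auto
    then show ?thesis using sq False by (simp add: even_iff_mod_2_eq_zero)
  qed
qed


lemma filter_Not_len: "length (filter id (map Not w)) + length (filter id w) = length w"
  by (induction w) auto

lemma filter_rotate_len: "length (filter id (rotate k w)) = length (filter id w)"
proof -
  let ?j = "k mod length w"
  have "rotate k w = drop ?j w @ take ?j w" by (rule rotate_drop_take)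
  moreover have "w = take ?j w @ drop ?j w" by simp
  ultimately show ?thesis by (metis filter_append length_append add.commute)
qed

lemma inj_mapNot: "inj_on (map Not) A"
proof (rule inj_onI)
  fix x y assume "map Not x = map Not y"
  then have "map Not (map Not x) = map Not (map Not y)" by simp
  then show "x = y" by (simp add: comp_def)
qed

lemma mapNot_orbit: "map Not ` rot_orbit w = rot_orbit (map Not w)"
  unfolding rot_orbit_def by (auto simp: rotate_map)

lemma balanced_Not: "w \<in> balanced_words d \<Longrightarrow> map Not w \<in> balanced_words d"
  using filter_Not_len[of w] by (auto simp: balanced_words_def)

lemma finite_PN: "finite (primitive_necklaces d)"
proof -
  have "finite (balanced_words d)"
    by (rule finite_subset[OF _ finite_len[of "2 * d"]]) (auto simp: balanced_words_def)
  then show ?thesis unfolding primitive_necklaces_def necklaces_def by simp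
qed

lemma PN_elem:
  assumes "d > 0"
  shows "N \<in> primitive_necklaces d \<longleftrightarrow> (\<exists>w. w \<in> balanced_words d \<and> per w = 2 * d \<and> N = rot_orbit w)"
proof -
  have "w \<in> balanced_words d \<Longrightarrow> w \<noteq> []" for w using assms by (auto simp: balanced_words_def)
  then show ?thesis unfolding primitive_necklaces_def necklaces_def using card_rot_orbit by auto
qed

lemma comp_PN:
  assumes "d > 0" "N \<in> primitive_necklaces d"
  shows "map Not ` N \<in> primitive_necklaces d"
proof -
  obtain w where w: "w \<in> balanced_words d" "per w = 2 * d" "N = rot_orbit w" using PN_elem[OF assms(1)] assms(2) by blast
  have ne: "w \<noteq> []" using w assms by (auto simp: balanced_words_def)
  have ne2: "map Not w \<noteq> []" using ne by simp
  have "map Not ` N = rot_orbit (map Not w)" using w mapNot_orbit by simp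
  moreover have "per (map Not w) = 2 * d"
    using card_rot_orbit[OF ne2] card_rot_orbit[OF ne] w card_image[OF inj_mapNot, of "rot_orbit w"] mapNot_orbit[of w]
    by simp
  ultimately show ?thesis using PN_elem[OF assms(1)] balanced_Not[OF w(1)] by blast
qed

lemma fixed_PN:
  assumes "d > 0"
  shows "{N \<in> primitive_necklaces d. map Not ` N = N} = rot_orbit ` PSC d"
proof (intro set_eqI iffI)
  fix N assume "N \<in> {N \<in> primitive_necklaces d. map Not ` N = N}"
  then have N: "N \<in> primitive_necklaces d" "map Not ` N = N" by auto
  obtain w where w: "w \<in> balanced_words d" "per w = 2 * d" "N = rot_orbit w" using PN_elem[OF assms(1)] N(1) by blast
  have len: "length w = 2 * d" using w by (simp add: balanced_words_def)
  have ne: "w \<noteq> []" using len assms by auto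
  have "map Not w \<in> N" using N(2) w(3) self_in_orbit[OF ne] by blast
  then obtain k where k: "k < 2 * d" "map Not w = rotate k w" using w(3) len unfolding rot_orbit_def by auto
  have "rotate (k + k) w = rotate k (rotate k w)" by (simp add: rotate_rotate)
  also have "\<dots> = rotate k (map Not w)" using k(2) by simp
  also have "\<dots> = map Not (rotate k w)" by (rule rotate_map)
  also have "\<dots> = map Not (map Not w)" using k(2) by simp
  also have "\<dots> = w" by (simp add: comp_def)
  finally have "per w dvd (k + k)" using rot_iff[OF ne] by simp
  then have "2 * d dvd 2 * k" using w(2) by (simp add: mult_2)
  then have "d dvd k" using assms by simp
  then obtain t where t: "k = d * t" by (rule dvdE)
  have "t < 2" using k(1) t assms by simp
  moreover have "t \<noteq> 0"
  proof
    assume "t = 0"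
    then have "map Not w = w" using k t by simp
    then show False using map_Not_neq[OF ne] by simp
  qed
  ultimately have "k = d" using t by simp
  then have "w \<in> PSC d" using k len w(2) by (simp add: PSC_def SC_def)
  then show "N \<in> rot_orbit ` PSC d" using w(3) by blast
next
  fix N assume "N \<in> rot_orbit ` PSC d"
  then obtain w where w: "w \<in> PSC d" "N = rot_orbit w" by blast
  have len: "length w = 2 * d" and rot: "rotate d w = map Not w" and pw: "per w = 2 * d"
    using w by (auto simp: PSC_def SC_def)
  have ne: "w \<noteq> []" using len assms by auto
  have "length (filter id (map Not w)) = length (filter id w)"
    using rot filter_rotate_len[of d w] by simp
  then have "length (filter id w) = d" using filter_Not_len[of w] len by simp
  then have bw: "w \<in> balanced_words d" using len by (simp add: balanced_words_def)
  have "N \<in> primitive_necklaces d" using PN_elem[OF assms] bw pw w(2) by blast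
  moreover have "map Not ` N = N"
  proof -
    have "map Not ` N = rot_orbit (rotate d w)" using w(2) mapNot_orbit rot by simp
    also have "\<dots> = rot_orbit w" using rot_orbit_same[OF ne] rot_orbit_range[OF ne] by blast
    finally show ?thesis using w(2) by simp
  qed
  ultimately show "N \<in> {N \<in> primitive_necklaces d. map Not ` N = N}" by simp
qed

theorem theorem2p5:
  fixes d :: nat
  assumes "d > 0"
  shows "odd (card (primitive_necklaces d)) \<longleftrightarrow> squarefree d"
proof -
  have "even (card (primitive_necklaces d)) \<longleftrightarrow> even (card {N \<in> primitive_necklaces d. map Not ` N = N})"
  proof (rule invol_parity[OF finite_PN])
    fix N assume "N \<in> primitive_necklaces d"
    then show "map Not ` N \<in> primitive_necklaces d" by (rule comp_PN[OF assms])
    show "map Not ` map Not ` N = N" by (simp add: image_image comp_def)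
  qed
  also have "card {N \<in> primitive_necklaces d. map Not ` N = N} = S d"
    using fixed_PN[OF assms] by (simp add: S_def)
  finally show ?thesis using S_odd_iff[OF assms] by simp
qed

end
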